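(* Let $N\ge2$ and let $M$ be the Riemannian model with pole $o$ and metric $dr^2+\psi^2(r)d\omega^2$, with $\psi$ smooth, positive on $(0,\infty)$, $\psi(0)=\psi''(0)=0$, $\psi'(0)=1$. Let $\alpha\in\mathbb{R}$ and $\Phi(r)=\left(\frac{\psi(r)}{r}\right)^\alpha$. Then on $M\setminus\{o\}$, $$-\Delta_g\Phi-\alpha\left[K^{rad}_{\pi,r}+(\alpha-2+N)H^{tan}_{\pi,r}\right]\Phi=-\alpha(\alpha-2+N)\frac{\Phi}{\psi^2}-\frac{\alpha(\alpha+1)}{r^2}\Phi+\frac{2\alpha^2+\alpha(N-1)}{r}\frac{\psi'}{\psi}\Phi.$$ Hence $\Phi(r)=\left(\frac{r}{\psi(r)}\right)^{\frac{N-1}{2}}$ satisfies $$-\Delta_g\Phi+\frac{(N-1)}{4}\left[2K^{rad}_{\pi,r}+(N-3)H^{tan}_{\pi,r}\right]\Phi=\frac{(N-1)(N-3)}{4}\Phi\left(\frac{1}{\psi^2}-\frac{1}{r^2}\right).$$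
   Context: $r$ is the distance from the pole, $d\omega^2$ the round metric of $\mathbb{S}^{N-1}$; for radial functions $\Delta_g\Phi=\Phi''+(N-1)\frac{\psi'}{\psi}\Phi'$. $K^{rad}_{\pi,r}=-\psi''/\psi$ and $H^{tan}_{\pi,r}=-(\psi'^2-1)/\psi^2$. *)

theory Defs
  imports "HOL-Analysis.Analysis"
begin

text \<open>Radial quantities on the model manifold with metric dr^2 + psi(r)^2 dw^2 in dimension N.
  A radial function Phi is identified with its profile r -> Phi(r).\<close>

definition radial_laplacian :: "nat \<Rightarrow> (real \<Rightarrow> real) \<Rightarrow> (real \<Rightarrow> real) \<Rightarrow> real \<Rightarrow> real" where
  "radial_laplacian N \<psi> \<Phi> r =
     deriv (deriv \<Phi>) r + (real N - 1) * (deriv \<psi> r / \<psi> r) * deriv \<Phi> r"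

definition K_rad :: "(real \<Rightarrow> real) \<Rightarrow> real \<Rightarrow> real" where
  "K_rad \<psi> r = - deriv (deriv \<psi>) r / \<psi> r"

definition H_tan :: "(real \<Rightarrow> real) \<Rightarrow> real \<Rightarrow> real" where
  "H_tan \<psi> r = - ((deriv \<psi> r)^2 - 1) / (\<psi> r)^2"

definition smooth_fun :: "(real \<Rightarrow> real) \<Rightarrow> bool" where
  "smooth_fun f \<longleftrightarrow> (\<forall>k x. ((deriv ^^ k) f) differentiable (at x))"

end

theory Submission
  imports Defs
begin

lemma core:
  fixes \<psi> \<psi>1 \<psi>2 F :: "real \<Rightarrow> real" and \<alpha> r :: real
  assumes d1: "\<And>x. (\<psi> has_real_derivative \<psi>1 x) (at x)"
    and d2: "\<And>x. (\<psi>1 has_real_derivative \<psi>2 x) (at x)"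
    and pos: "\<And>s. s > 0 \<Longrightarrow> \<psi> s > 0"
    and F: "\<And>s. s > 0 \<Longrightarrow> F s = (\<psi> s / s) powr \<alpha>"
    and r: "r > 0"
  shows "deriv F r = F r * \<alpha> * (\<psi>1 r / \<psi> r - 1 / r)"
    "deriv (deriv F) r = F r * (\<alpha>^2 * (\<psi>1 r / \<psi> r - 1 / r)^2
        + \<alpha> * (\<psi>2 r / \<psi> r - (\<psi>1 r / \<psi> r)^2 + 1 / r^2))"
proof -
  have DF: "(F has_real_derivative F s * \<alpha> * (\<psi>1 s / \<psi> s - 1 / s)) (at s)" if s: "s > 0" for s
  proof -
    have ps: "\<psi> s > 0" using pos s by auto
    have q: "((\<lambda>x. \<psi> x / x) has_real_derivative (\<psi>1 s * s - \<psi> s) / s^2) (at s)"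
      using s by (auto intro!: derivative_eq_intros d1 simp: power2_eq_square field_simps)
    have "((\<lambda>x. (\<psi> x / x) powr \<alpha>) has_real_derivative
        \<alpha> * (\<psi> s / s) powr (\<alpha> - of_nat 1) * ((\<psi>1 s * s - \<psi> s) / s^2)) (at s)"
      by (rule DERIV_fun_powr[OF q]) (use ps s in auto)
    moreover have "\<alpha> * (\<psi> s / s) powr (\<alpha> - of_nat 1) * ((\<psi>1 s * s - \<psi> s) / s^2)
        = F s * \<alpha> * (\<psi>1 s / \<psi> s - 1 / s)"
      using ps s by (simp add: F powr_diff field_simps power2_eq_square)
    ultimately have "((\<lambda>x. (\<psi> x / x) powr \<alpha>) has_real_derivative
        F s * \<alpha> * (\<psi>1 s / \<psi> s - 1 / s)) (at s)" by simp
    then show ?thesis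
      by (rule has_field_derivative_transform_within_open[where S="{0<..}"]) (use s F in auto)
  qed
  show dF: "deriv F r = F r * \<alpha> * (\<psi>1 r / \<psi> r - 1 / r)"
    using DF[OF r] by (rule DERIV_imp_deriv)
  have pr: "\<psi> r > 0" using pos r by auto
  have "((\<lambda>s. F s * \<alpha> * (\<psi>1 s / \<psi> s - 1 / s)) has_real_derivative
      (F r * \<alpha> * (\<psi>1 r / \<psi> r - 1 / r)) * \<alpha> * (\<psi>1 r / \<psi> r - 1 / r)
      + F r * \<alpha> * ((\<psi>2 r * \<psi> r - \<psi>1 r * \<psi>1 r) / (\<psi> r * \<psi> r) + 1 / (r * r))) (at r)"
    using r pr by (auto intro!: derivative_eq_intros DF d1 d2 simp: field_simps power2_eq_square)
  then have "(deriv F has_real_derivative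
      (F r * \<alpha> * (\<psi>1 r / \<psi> r - 1 / r)) * \<alpha> * (\<psi>1 r / \<psi> r - 1 / r)
      + F r * \<alpha> * ((\<psi>2 r * \<psi> r - \<psi>1 r * \<psi>1 r) / (\<psi> r * \<psi> r) + 1 / (r * r))) (at r)"
    by (rule has_field_derivative_transform_within_open[where S="{0<..}"])
       (use r in \<open>auto intro: DERIV_imp_deriv[OF DF, symmetric]\<close>)
  then have "deriv (deriv F) r = (F r * \<alpha> * (\<psi>1 r / \<psi> r - 1 / r)) * \<alpha> * (\<psi>1 r / \<psi> r - 1 / r)
      + F r * \<alpha> * ((\<psi>2 r * \<psi> r - \<psi>1 r * \<psi>1 r) / (\<psi> r * \<psi> r) + 1 / (r * r))"
    by (rule DERIV_imp_deriv)
  then show "deriv (deriv F) r = F r * (\<alpha>^2 * (\<psi>1 r / \<psi> r - 1 / r)^2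
        + \<alpha> * (\<psi>2 r / \<psi> r - (\<psi>1 r / \<psi> r)^2 + 1 / r^2))"
    using pr r by (simp add: field_simps power2_eq_square)
qed

theorem lemma4p2:
  fixes N :: nat and \<psi> :: "real \<Rightarrow> real"
  assumes "N \<ge> 2"
    and "smooth_fun \<psi>"
    and "\<And>r. r > 0 \<Longrightarrow> \<psi> r > 0"
    and "\<psi> 0 = 0" and "deriv \<psi> 0 = 1" and "deriv (deriv \<psi>) 0 = 0"
  shows "(\<forall>\<alpha> r. r > 0 \<longrightarrow>
            (let \<Phi> = (\<lambda>s. (\<psi> s / s) powr \<alpha>) in
              - radial_laplacian N \<psi> \<Phi> r
                - \<alpha> * (K_rad \<psi> r + (\<alpha> - 2 + real N) * H_tan \<psi> r) * \<Phi> r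
              = - \<alpha> * (\<alpha> - 2 + real N) * \<Phi> r / (\<psi> r)^2
                - \<alpha> * (\<alpha> + 1) / r^2 * \<Phi> r
                + (2 * \<alpha>^2 + \<alpha> * (real N - 1)) / r * (deriv \<psi> r / \<psi> r) * \<Phi> r))
       \<and> (\<forall>r. r > 0 \<longrightarrow>
            (let \<Phi> = (\<lambda>s. (s / \<psi> s) powr ((real N - 1) / 2)) in
              - radial_laplacian N \<psi> \<Phi> r
                + (real N - 1) / 4 * (2 * K_rad \<psi> r + (real N - 3) * H_tan \<psi> r) * \<Phi> r
              = (real N - 1) * (real N - 3) / 4 * \<Phi> r * (1 / (\<psi> r)^2 - 1 / r^2)))"
proof -
  have sm: "\<And>k x. ((deriv ^^ k) \<psi>) differentiable (at x)"
    using assms(2) unfolding smooth_fun_def by blast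
  have d1: "\<And>x. (\<psi> has_real_derivative deriv \<psi> x) (at x)"
    using sm[of 0] by (simp add: DERIV_deriv_iff_real_differentiable)
  have d2: "\<And>x. (deriv \<psi> has_real_derivative deriv (deriv \<psi>) x) (at x)"
    using sm[of 1] by (simp add: DERIV_deriv_iff_real_differentiable)
  note C = core[OF d1 d2 assms(3)]
  show ?thesis
  proof (intro conjI allI impI)
    fix \<alpha> r :: real assume r: "r > 0"
    define F where "F = (\<lambda>s. (\<psi> s / s) powr \<alpha>)"
    have e1: "deriv F r = F r * \<alpha> * (deriv \<psi> r / \<psi> r - 1 / r)"
      and e2: "deriv (deriv F) r = F r * (\<alpha>^2 * (deriv \<psi> r / \<psi> r - 1 / r)^2
        + \<alpha> * (deriv (deriv \<psi>) r / \<psi> r - (deriv \<psi> r / \<psi> r)^2 + 1 / r^2))"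
      using C[of F \<alpha> r] r by (auto simp: F_def)
    have pr: "\<psi> r > 0" using assms(3) r by auto
    show "let \<Phi> = (\<lambda>s. (\<psi> s / s) powr \<alpha>) in
              - radial_laplacian N \<psi> \<Phi> r
                - \<alpha> * (K_rad \<psi> r + (\<alpha> - 2 + real N) * H_tan \<psi> r) * \<Phi> r
              = - \<alpha> * (\<alpha> - 2 + real N) * \<Phi> r / (\<psi> r)^2
                - \<alpha> * (\<alpha> + 1) / r^2 * \<Phi> r
                + (2 * \<alpha>^2 + \<alpha> * (real N - 1)) / r * (deriv \<psi> r / \<psi> r) * \<Phi> r"
      unfolding Let_def F_def[symmetric] radial_laplacian_def K_rad_def H_tan_def e1 e2
      using pr r by (simp add: field_simps power2_eq_square)
  next
    fix r :: real assume r: "r > 0"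
    define \<alpha> where "\<alpha> = - ((real N - 1) / 2)"
    define F where "F = (\<lambda>s. (s / \<psi> s) powr ((real N - 1) / 2))"
    have FF: "F s = (\<psi> s / s) powr \<alpha>" if "s > 0" for s
      using that assms(3)[OF that] by (simp add: F_def \<alpha>_def powr_minus powr_divide)
    have e1: "deriv F r = F r * \<alpha> * (deriv \<psi> r / \<psi> r - 1 / r)"
      and e2: "deriv (deriv F) r = F r * (\<alpha>^2 * (deriv \<psi> r / \<psi> r - 1 / r)^2
        + \<alpha> * (deriv (deriv \<psi>) r / \<psi> r - (deriv \<psi> r / \<psi> r)^2 + 1 / r^2))"
      using core[OF d1 d2 assms(3) FF r] by auto
    have pr: "\<psi> r > 0" using assms(3) r by auto
    show "let \<Phi> = (\<lambda>s. (s / \<psi> s) powr ((real N - 1) / 2)) in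
              - radial_laplacian N \<psi> \<Phi> r
                + (real N - 1) / 4 * (2 * K_rad \<psi> r + (real N - 3) * H_tan \<psi> r) * \<Phi> r
              = (real N - 1) * (real N - 3) / 4 * \<Phi> r * (1 / (\<psi> r)^2 - 1 / r^2)"
      unfolding Let_def F_def[symmetric] radial_laplacian_def K_rad_def H_tan_def e1 e2
      using pr r by (simp add: field_simps power2_eq_square \<alpha>_def)
  qed
qed

end
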